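(* Let $(a_m)_{m\ge1}$ be defined by $a_1=2$ and $a_{m+1}=a_m+1/a_m$, so that $[-a_m,a_m]$ is the support of the $m$-fold monotone convolution of the standard semicircle law. Then for every $m\ge3$ $$\sqrt{m+\sqrt{m(m+1)}}\;\le\; a_m\;\le\;\sqrt{2m+\sqrt{2m}}.$$
   Context: The standard semicircle law is $\frac1{2\pi}\sqrt{4-x^2}\mathbf 1_{[-2,2]}dx$; monotone convolution $\mu\rhd\nu$ is the probability measure $\rho$ with $H_\rho=H_\mu\circ H_\nu$ where $H_\mu=1/\mathcal G_\mu$ and $\mathcal G_\mu(z)=\int\frac{\mu(dx)}{z-x}$. *)

theory Defs
  imports Complex_Main
begin

text \<open>The sequence a_m (m \<ge> 1): a_1 = 2, a_(m+1) = a_m + 1/a_m.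
  The value at index 0 is an unused placeholder.\<close>
fun a_seq :: "nat \<Rightarrow> real" where
  "a_seq 0 = 0"
| "a_seq (Suc 0) = 2"
| "a_seq (Suc (Suc n)) = a_seq (Suc n) + 1 / a_seq (Suc n)"

end

theory Submission imports Defs begin
lemma up: fixes x y :: real assumes "x \<ge> 1" "y \<ge> 0" "y^2 = x^2+2"
  shows "x + 1/(x^2+x) \<le> y"
proof -
  have x0: "x^2+x > 0" "x+1>0" using assms by (auto simp: add_pos_pos)
  have "2*x*(1/(x^2+x)) = 2/(x+1)" using x0 by (simp add: power2_eq_square field_simps)
  hence e: "(x + 1/(x^2+x))^2 = x^2 + 2/(x+1) + (1/(x^2+x))^2"
    by (simp add: power2_sum)
  have a: "2/(x+1) \<le> 1" using assms by simp
  have "x^2+x \<ge> 1" using assms zero_le_power2[of x] by linarith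
  hence h1: "1/(x^2+x) \<le> 1" and h0: "1/(x^2+x) \<ge> 0" by auto
  have b: "(1/(x^2+x))^2 \<le> 1" by (rule power_le_one[OF h0 h1])
  have "(x + 1/(x^2+x))^2 \<le> y^2" unfolding e assms(3) using a b by linarith
  thus ?thesis using assms(2) by (rule power2_le_imp_le)
qed
lemma lo: fixes s t m :: real assumes "m \<ge> 1" "s \<ge> 0" "t\<ge>0" "s^2 = m*(m+1)" "t^2=(m+1)*(m+2)"
  shows "t \<le> s + 1 + 1/(m+s)"
proof -
  define c where "c = m + 1/2 - 1/(8*m)"
  have m0: "m > 0" using assms by simp
  have "1/(8*m) \<le> 1/8" using assms by (simp add: field_simps)
  hence c0: "c \<ge> 0" unfolding c_def using assms by linarith
  have "c^2 = m^2+m+1/4 - (2*m+1)/(8*m) + 1/(64*m^2)" unfolding c_def using m0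
    by (simp add: power2_eq_square field_simps)
  also have "(2*m+1)/(8*m) = 1/4 + 1/(8*m)" using m0 by (simp add: field_simps)
  also have "1/(64*m^2) \<le> 1/(8*m)" using assms m0 by (simp add: power2_eq_square field_simps)
  ultimately have "c^2 \<le> s^2" using assms(4) by (simp add: power2_eq_square algebra_simps)
  hence s1: "c \<le> s" using assms(2) by (rule power2_le_imp_le)
  have ms: "m + s > 0" using m0 assms by simp
  have "s^2 \<le> (m+1)^2" using assms(1,4) by (simp add: power2_eq_square algebra_simps)
  moreover have "m + 1 \<ge> 0" using m0 by simp
  ultimately have sm: "s \<le> m+1" by (rule power2_le_imp_le)
  have "8*m*(s+1) \<ge> 8*m*1" using m0 assms(2) by (intro mult_left_mono) auto
  hence h: "m+s \<le> 8*m*(s+1)" using sm m0 assms(1) by linarith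
  have q: "2*(s+1)/(m+s) \<ge> 1/(4*m)" using h ms m0 by (simp add: field_simps)
  have "2*(s+1)*(1/(m+s)) = 2*(s+1)/(m+s)" by simp
  hence "(s + 1 + 1/(m+s))^2 = (s+1)^2 + 2*(s+1)/(m+s) + (1/(m+s))^2"
    by (simp only: power2_sum)
  also have "(s+1)^2 = s^2 + 2*s + 1" by (simp add: power2_eq_square algebra_simps)
  finally have "(s + 1 + 1/(m+s))^2 = s^2 + 2*s + 1 + 2*(s+1)/(m+s) + (1/(m+s))^2" .
  moreover have "(1/(m+s))^2 \<ge> 0" by simp
  moreover have "2*s \<ge> 2*m+1 - 1/(4*m)" using s1 unfolding c_def by simp
  moreover have "t^2 = s^2 + 2*m + 2" using assms(4,5) by (simp add: algebra_simps)
  ultimately have "t^2 \<le> (s + 1 + 1/(m+s))^2" using q by linarith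
  moreover have "0 \<le> s + 1 + 1/(m+s)" using ms assms(2) by simp
  ultimately show ?thesis by (rule power2_le_imp_le)
qed
lemma a_rec: "n \<ge> 1 \<Longrightarrow> a_seq (Suc n) = a_seq n + 1 / a_seq n"
  by (cases n) auto

lemma a_ge2: "n \<ge> 1 \<Longrightarrow> a_seq n \<ge> 2"
proof (induction n rule: nat_induct_at_least)
  case base then show ?case by simp
next
  case (Suc n)
  then have "a_seq (Suc n) = a_seq n + 1 / a_seq n" by (simp add: a_rec)
  moreover have "1 / a_seq n \<ge> 0" using Suc by simp
  ultimately show ?case using Suc by linarith
qed

lemma a_sq: assumes "n \<ge> 1" shows "(a_seq (Suc n))^2 = (a_seq n)^2 + 2 + 1/(a_seq n)^2"
proof -
  have "a_seq n \<noteq> 0" using a_ge2[OF assms] by simp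
  thus ?thesis using a_rec[OF assms] by (simp add: power2_eq_square field_simps)
qed

lemma bmono: fixes B U :: real assumes "1 \<le> B" "B \<le> U" shows "B + 1/B \<le> U + 1/U"
proof -
  have "U + 1/U - (B + 1/B) = (U - B) * (1 - 1/(U*B))" using assms by (simp add: field_simps)
  moreover have "1*1 \<le> U*B" using assms by (intro mult_mono) auto
  hence "1/(U*B) \<le> 1" by simp
  hence "(U - B) * (1 - 1/(U*B)) \<ge> 0" using assms by (intro mult_nonneg_nonneg) auto
  ultimately show ?thesis by linarith
qed

lemma main: "m \<ge> 3 \<Longrightarrow> real m + sqrt (real m * (real m + 1)) \<le> (a_seq m)^2
   \<and> (a_seq m)^2 \<le> 2 * real m + sqrt (2 * real m)"
proof (induction m rule: nat_induct_at_least)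
  case base
  have a3: "a_seq 3 = 29/10" by (simp add: numeral_3_eq_3)
  have s1: "sqrt 12 \<le> 4" by (rule real_le_lsqrt) simp_all
  have s2: "2.41 \<le> sqrt (6::real)" by (rule real_le_rsqrt) (simp add: power2_eq_square)
  show ?case using s1 s2 by (simp add: a3 power2_eq_square)
next
  case (Suc n)
  have n1: "n \<ge> 1" using Suc by simp
  define B where "B = (a_seq n)^2"
  have "2*2 \<le> a_seq n * a_seq n" using a_ge2[OF n1] by (intro mult_mono) auto
  hence B1: "B \<ge> 1" unfolding B_def power2_eq_square by linarith
  have sq: "(a_seq (Suc n))^2 = B + 2 + 1/B" unfolding B_def using a_sq[OF n1] by simp
  define x where "x = sqrt (2 * real n)"
  define y where "y = sqrt (2 * real (Suc n))"
  define s where "s = sqrt (real n * (real n + 1))"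
  define t where "t = sqrt (real (Suc n) * (real (Suc n) + 1))"
  have x1: "x \<ge> 1" unfolding x_def using n1 by simp
  have x2: "x^2 = 2 * real n" unfolding x_def by simp
  have y0: "y \<ge> 0" "y^2 = x^2 + 2" unfolding y_def x2 by simp_all
  have s0: "s \<ge> 0" "s^2 = real n * (real n + 1)" unfolding s_def by simp_all
  have t0: "t \<ge> 0" "t^2 = (real n + 1) * (real n + 2)" unfolding t_def by (simp_all add: algebra_simps)
  have IH1: "real n + s \<le> B" and IH2: "B \<le> 2 * real n + x"
    using Suc unfolding B_def s_def x_def by auto
  have L1: "1 \<le> real n + s" using n1 s0 by simp
  have "B + 1/B \<le> (2 * real n + x) + 1/(2 * real n + x)" by (rule bmono[OF B1 IH2])
  also have "2 * real n + x = x^2 + x" using x2 by simp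
  finally have u1: "B + 1/B \<le> x^2 + x + 1/(x^2+x)" .
  have u2: "x + 1/(x^2+x) \<le> y" by (rule up[OF x1 y0])
  have "(real n + s) + 1/(real n + s) \<le> B + 1/B" by (rule bmono[OF L1 IH1])
  moreover have "t \<le> s + 1 + 1/(real n + s)" by (rule lo) (use n1 s0 t0 in auto)
  ultimately have l: "real (Suc n) + t \<le> B + 2 + 1/B" by simp
  have rs: "real (Suc n) = real n + 1" by simp
  have "B + 2 + 1/B \<le> x^2 + x + 1/(x^2+x) + 2" using u1 by linarith
  also have "\<dots> = 2 * real n + 2 + (x + 1/(x^2+x))" using x2 by simp
  also have "\<dots> \<le> 2 * real n + 2 + y" using u2 by linarith
  also have "\<dots> = 2 * real (Suc n) + y" using rs by simp
  finally have u: "B + 2 + 1/B \<le> 2 * real (Suc n) + y" .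
  show ?case unfolding sq t_def[symmetric] y_def[symmetric] using l u by (rule conjI)
qed

theorem theorem3p10:
  fixes m :: nat
  assumes "m \<ge> 3"
  shows "sqrt (real m + sqrt (real m * (real m + 1))) \<le> a_seq m
       \<and> a_seq m \<le> sqrt (2 * real m + sqrt (2 * real m))"
proof -
  have a0: "a_seq m \<ge> 0" using a_ge2[of m] assms by simp
  have M: "real m + sqrt (real m * (real m + 1)) \<le> (a_seq m)^2"
     "(a_seq m)^2 \<le> 2 * real m + sqrt (2 * real m)" using main[OF assms] by auto
  have "sqrt (real m + sqrt (real m * (real m + 1))) \<le> sqrt ((a_seq m)^2)"
    using M(1) by (rule real_sqrt_le_mono)
  also have "\<dots> = a_seq m" using a0 by simp
  finally show ?thesis using real_le_rsqrt[OF M(2)] by simp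
qed

end
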